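(* Let $m$ be an integer and suppose $m=N_2(1+(x-1)^3h(x))$ for some $h\in\mathbb Z[x]$. Then there is $k\in\mathbb Z[x]$ with $m=N_1(1+(x-1)^3k(x))$, where $5\nmid k(1)$ if $5\nmid h(1)$, and $5\mid k(1)$ if $5\mid h(1)$.
   Context: For $j\geq1$, $\omega_j=e^{2\pi i/5^j}$ and $N_j(F)=\prod_{1\leq \ell\leq 5^j,\ 5\nmid \ell}F(\omega_j^\ell)$. *)

theory Defs
  imports "HOL-Complex_Analysis.Complex_Analysis" "HOL-Computational_Algebra.Polynomial"
begin

definition omega :: "nat \<Rightarrow> complex" where
  "omega j = exp (2 * pi * \<i> / of_nat (5 ^ j))"

definition Nnorm :: "nat \<Rightarrow> int poly \<Rightarrow> complex" where
  "Nnorm j F = (\<Prod>l \<in> {l. 1 \<le> l \<and> l \<le> 5 ^ j \<and> \<not> 5 dvd l}.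
                  poly (map_poly of_int F) (omega j ^ l))"

end

theory Submission
  imports Defs
begin

abbreviation cp :: "int poly \<Rightarrow> 'a::comm_ring_1 poly" where "cp p \<equiv> map_poly of_int p"

lemma cp_add: "cp (p + q) = cp p + cp q"
  by (rule poly_eqI) (simp add: coeff_map_poly)
lemma cp_minus: "cp (- p) = - cp p"
  by (rule poly_eqI) (simp add: coeff_map_poly)
lemma cp_diff: "cp (p - q) = cp p - cp q"
  by (rule poly_eqI) (simp add: coeff_map_poly)
lemma cp_mult: "cp (p * q) = cp p * cp q"
  by (rule poly_eqI) (simp add: coeff_map_poly coeff_mult)
lemma cp_1: "cp 1 = 1" by simp
lemma cp_pow: "cp (p ^ n) = cp p ^ n"
  by (induction n) (simp_all add: cp_mult)
lemma cp_numeral: "cp (numeral k) = numeral k"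
  by (simp add: numeral_poly map_poly_pCons)
lemma cp_sum: "cp (\<Sum>i\<in>A. f i) = (\<Sum>i\<in>A. cp (f i))"
  by (induction A rule: infinite_finite_induct) (simp_all add: cp_add)
lemma cp_monom: "cp (monom c n) = monom (of_int c) n"
  by (simp add: map_poly_monom)
lemma cp_X: "cp [:0,1:] = [:0,1:]"
  by (simp add: map_poly_pCons)

definition Fs :: "int poly \<Rightarrow> nat \<Rightarrow> int poly" where
  "Fs F r = (\<Sum>n\<in>{n. n \<le> degree F \<and> n mod 5 = r}. monom (coeff F n) (n div 5))"
definition Fr5 :: "int poly \<Rightarrow> nat \<Rightarrow> int poly" where
  "Fr5 F r = (\<Sum>n\<in>{n. n \<le> degree F \<and> n mod 5 = r}. monom (coeff F n) (5 * (n div 5)))"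

lemma sum_split5:
  fixes g :: "nat \<Rightarrow> 'b::comm_monoid_add"
  shows "(\<Sum>r<5. \<Sum>n\<in>{n. n \<le> D \<and> n mod 5 = r}. g n) = (\<Sum>n\<le>D. g n)"
proof -
  have "(\<Sum>r<5. \<Sum>n\<in>{n. n \<le> D \<and> n mod 5 = r}. g n) = (\<Sum>r<5. \<Sum>n\<le>D. if n mod 5 = r then g n else 0)"
  proof (rule sum.cong[OF refl])
    fix r
    have e: "{n. n \<le> D \<and> n mod 5 = r} = {n\<in>{..D}. n mod 5 = r}" by auto
    show "(\<Sum>n\<in>{n. n \<le> D \<and> n mod 5 = r}. g n) = (\<Sum>n\<le>D. if n mod 5 = r then g n else 0)"
      using e sum.inter_filter[of "{..D}" g "\<lambda>n. n mod 5 = r"] by simp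
  qed
  also have "\<dots> = (\<Sum>n\<le>D. \<Sum>r<5. if n mod 5 = r then g n else 0)" by (rule sum.swap)
  also have "\<dots> = (\<Sum>n\<le>D. g n)" by (intro sum.cong refl) (simp add: sum.delta')
  finally show ?thesis .
qed

lemma decomp_poly: "F = (\<Sum>r<5. monom 1 r * Fr5 F r)"
proof -
  have "(\<Sum>r<5. monom 1 r * Fr5 F r) = (\<Sum>r<5. \<Sum>n\<in>{n. n \<le> degree F \<and> n mod 5 = r}. monom (coeff F n) n)"
  proof (intro sum.cong refl)
    fix r assume r: "r \<in> {..<5::nat}"
    show "monom 1 r * Fr5 F r = (\<Sum>n\<in>{n. n \<le> degree F \<and> n mod 5 = r}. monom (coeff F n) n)"
      unfolding Fr5_def sum_distrib_left
    proof (intro sum.cong refl)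
      fix n assume "n \<in> {n. n \<le> degree F \<and> n mod 5 = r}"
      then have "r + 5 * (n div 5) = n" by auto
      then show "monom 1 r * monom (coeff F n) (5 * (n div 5)) = monom (coeff F n) n"
        by (simp add: mult_monom)
    qed
  qed
  also have "\<dots> = F" by (simp add: sum_split5 poly_as_sum_of_monoms)
  finally show ?thesis by simp
qed

lemma Fr5_eval: "poly (cp (Fr5 F r)) t = poly (cp (Fs F r)) ((t::'a::comm_ring_1)^5)"
  unfolding Fr5_def Fs_def cp_sum poly_sum cp_monom poly_monom
  by (simp add: power_mult)

lemma decomp_eval: "poly (cp F) (t::'a::comm_ring_1) = (\<Sum>r<5. t^r * poly (cp (Fs F r)) (t^5))"
proof -
  have "poly (cp F) t = poly (cp (\<Sum>r<5. monom 1 r * Fr5 F r)) t" using decomp_poly[of F] by simp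
  also have "\<dots> = (\<Sum>r<5. t^r * poly (cp (Fs F r)) (t^5))"
    unfolding cp_sum poly_sum cp_mult poly_mult cp_monom poly_monom Fr5_eval by simp
  finally show ?thesis .
qed

lemma f5aux: "(r::int) = 0 \<or> r = 1 \<or> r = 2 \<or> r = 3 \<or> r = 4 \<Longrightarrow> (r^5 mod 5 - r) mod 5 = 0"
  by (elim disjE) simp_all

lemma fermat5: "(5::int) dvd c^5 - c"
proof -
  have A: "(c^5 - c) mod 5 = ((c mod 5)^5 mod 5 - c mod 5) mod 5"
    by (subst mod_diff_eq[symmetric]) (simp add: power_mod)
  have "0 \<le> c mod 5" "c mod 5 < 5" by simp_all
  then have "c mod 5 = 0 \<or> c mod 5 = 1 \<or> c mod 5 = 2 \<or> c mod 5 = 3 \<or> c mod 5 = 4" by linarith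
  then have B: "((c mod 5)^5 mod 5 - c mod 5) mod 5 = 0" by (rule f5aux)
  have "(c^5 - c) mod 5 = 0" using A B by (rule trans)
  then show ?thesis by (rule mod_0_imp_dvd)
qed

lemma binom5: "((x::'a::comm_ring_1) + y)^5 = x^5 + y^5 + 5*(x^4*y + 2*x^3*y^2 + 2*x^2*y^3 + x*y^4)"
  by (simp add: algebra_simps eval_nat_numeral)

lemma frob5:
  fixes c :: "'b \<Rightarrow> int" and e :: "'b \<Rightarrow> nat"
  assumes "finite S"
  shows "[:5:] dvd (\<Sum>n\<in>S. monom (c n) (e n))^5 - (\<Sum>n\<in>S. monom (c n) (5 * e n))"
  using assms
proof (induction S rule: finite_induct)
  case empty then show ?case by simp
next
  case (insert a S)
  define A where "A = (\<Sum>n\<in>S. monom (c n) (e n))"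
  define A5 where "A5 = (\<Sum>n\<in>S. monom (c n) (5 * e n))"
  define m where "m = monom (c a) (e a)"
  have ih: "[:5:] dvd A^5 - A5" using insert unfolding A_def A5_def by simp
  obtain d where d: "c a ^ 5 - c a = 5 * d" using fermat5[of "c a"] by (auto elim: dvdE)
  have m5: "m^5 = monom (c a ^ 5) (5 * e a)" unfolding m_def by (simp add: monom_power mult.commute)
  have "m^5 - monom (c a) (5 * e a) = monom (c a ^ 5 - c a) (5 * e a)" unfolding m5 by (simp add: diff_monom)
  also have "\<dots> = [:5:] * monom d (5 * e a)" using d by (simp add: smult_monom)
  finally have "m^5 - monom (c a) (5 * e a) = [:5:] * monom d (5 * e a)" .
  then have dm: "[:5:] dvd m^5 - monom (c a) (5 * e a)" by (metis dvd_triv_left)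
  have bin: "(m + A)^5 - (monom (c a) (5 * e a) + A5) = (m^5 - monom (c a) (5 * e a)) + (A^5 - A5)
     + [:5:] * (m^4*A + 2*m^3*A^2 + 2*m^2*A^3 + m*A^4)"
    unfolding binom5 numeral_poly[symmetric] by (simp add: algebra_simps)
  have "(\<Sum>n\<in>insert a S. monom (c n) (e n))^5 - (\<Sum>n\<in>insert a S. monom (c n) (5 * e n))
     = (m + A)^5 - (monom (c a) (5 * e a) + A5)" using insert by (simp add: A_def A5_def m_def)
  also have "\<dots> = (m^5 - monom (c a) (5 * e a)) + (A^5 - A5)
     + [:5:] * (m^4*A + 2*m^3*A^2 + 2*m^2*A^3 + m*A^4)" by (rule bin)
  finally have eq: "(\<Sum>n\<in>insert a S. monom (c n) (e n))^5 - (\<Sum>n\<in>insert a S. monom (c n) (5 * e n))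
     = (m^5 - monom (c a) (5 * e a)) + (A^5 - A5) + [:5:] * (m^4*A + 2*m^3*A^2 + 2*m^2*A^3 + m*A^4)" .
  show ?case unfolding eq by (intro dvd_add dm ih dvd_triv_left)
qed

definition Qf :: "'a::comm_ring_1 \<Rightarrow> 'a \<Rightarrow> 'a \<Rightarrow> 'a \<Rightarrow> 'a \<Rightarrow> 'a \<Rightarrow> 'a" where
 "Qf a0 a1 a2 a3 a4 y = - a2*a3^3*a4*y^3 + a2^2*a3*a4^2*y^3 + a1*a3^2*a4^2*y^3 - a1*a2*a4^3*y^3
   - a1*a2^3*a3*y^2 + a1^2*a2*a3^2*y^2 + a1^2*a2^2*a4*y^2 - a1^3*a3*a4*y^2 - a0*a3*a4^3*y^3
   + a0*a2^2*a3^2*y^2 - a0*a2^3*a4*y^2 - a0*a1*a3^3*y^2 - a0*a1*a2*a3*a4*y^2 + a0*a1^2*a4^2*y^2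
   - a0*a1^3*a2*y + a0^2*a3^2*a4*y^2 + a0^2*a2*a4^2*y^2 + a0^2*a1*a2^2*y + a0^2*a1^2*a3*y
   - a0^3*a2*a3*y - a0^3*a1*a4*y"

definition Nf :: "'a::comm_ring_1 \<Rightarrow> 'a \<Rightarrow> 'a \<Rightarrow> 'a \<Rightarrow> 'a \<Rightarrow> 'a \<Rightarrow> 'a" where
 "Nf a0 a1 a2 a3 a4 y = a0^5 + y*a1^5 + y^2*a2^5 + y^3*a3^5 + y^4*a4^5 + 5 * Qf a0 a1 a2 a3 a4 y"

lemma normB_aux:
  fixes z b0 b1 b2 b3 b4 A B C :: complex
  assumes z5: "z^5 = 1" and phi: "1 + z + z^2 + z^3 + z^4 = 0"
   and "A = b0^2+b1^2+b2^2+b3^2+b4^2" "B = b0*b1+b1*b2+b2*b3+b3*b4+b4*b0" "C = b0*b2+b1*b3+b2*b4+b3*b0+b4*b1"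
  shows "(b0+b1+b2+b3+b4) * (b0 + z*b1 + z^2*b2 + z^3*b3 + z^4*b4) * (b0 + z^2*b1 + z^4*b2 + z*b3 + z^3*b4)
     * (b0 + z^3*b1 + z*b2 + z^4*b3 + z^2*b4) * (b0 + z^4*b1 + z^3*b2 + z^2*b3 + z*b4)
   = (b0+b1+b2+b3+b4) * (A^2 - A*(B+C) - B^2 - C^2 + 3*B*C)"
proof -
  define p1 where "p1 = z + z^4"
  define p2 where "p2 = z^2 + z^3"
  have s: "p1 + p2 = -1" using phi unfolding p1_def p2_def by (simp add: algebra_simps eq_neg_iff_add_eq_0)
  have zk: "z^(5+k) = z^k" for k using z5 by (simp add: power_add)
  have z6: "z^6 = z" "z^7 = z^2" "z^8 = z^3" using zk[of 1] zk[of 2] zk[of 3] by simp_all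
  have pr: "p1 * p2 = -1" unfolding p1_def p2_def 
  proof -
    have "(z + z^4) * (z^2 + z^3) = z^3 + z^4 + z^6 + z^7" by algebra
    also have "\<dots> = -1" using z6 phi by (simp add: algebra_simps eq_neg_iff_add_eq_0)
    finally show "(z + z^4) * (z^2 + z^3) = -1" .
  qed
  have e14: "(b0 + z*b1 + z^2*b2 + z^3*b3 + z^4*b4) * (b0 + z^4*b1 + z^3*b2 + z^2*b3 + z*b4) = A + p1*B + p2*C"
  proof -
    have "(b0 + z*b1 + z^2*b2 + z^3*b3 + z^4*b4) * (b0 + z^4*b1 + z^3*b2 + z^2*b3 + z*b4) = A + p1*B + p2*C + (z^5 - 1)*(b4^2 + b3^2 + b2^2 + b1^2 + z*b3*b4 + z*b2*b3 + z*b1*b2 + z^2*b2*b4 + z^2*b1*b3 + z^3*b1*b4)"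
      unfolding assms(3-5) p1_def p2_def by algebra
    then show ?thesis using z5 by simp
  qed
  have e23: "(b0 + z^2*b1 + z^4*b2 + z*b3 + z^3*b4) * (b0 + z^3*b1 + z*b2 + z^4*b3 + z^2*b4) = A + p2*B + p1*C"
  proof -
    have "(b0 + z^2*b1 + z^4*b2 + z*b3 + z^3*b4) * (b0 + z^3*b1 + z*b2 + z^4*b3 + z^2*b4) = A + p2*B + p1*C + (z^5 - 1)*(b4^2 + b3^2 + b2^2 + b1^2 + z*b2*b4 + z*b1*b4 + z*b1*b3 + z^2*b3*b4 + z^2*b1*b2 + z^3*b2*b3)"
      unfolding assms(3-5) p1_def p2_def by algebra
    then show ?thesis using z5 by simp
  qed
  have pp: "(A + p1*B + p2*C) * (A + p2*B + p1*C) = A^2 - A*(B+C) - B^2 - C^2 + 3*B*C"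
  proof -
    have "(A + p1*B + p2*C) * (A + p2*B + p1*C) = A^2 + (p1+p2)*A*(B+C) + (p1*p2)*(B^2+C^2) + ((p1+p2)^2 - 2*(p1*p2))*B*C"
      by (simp add: algebra_simps power2_eq_square)
    also have "\<dots> = A^2 - A*(B+C) - B^2 - C^2 + 3*B*C" by (simp add: s pr algebra_simps)
    finally show ?thesis .
  qed
  have gen: "L0*L1*L2*L3*L4 = L0*((L1*L4)*(L2*L3))" for L0 L1 L2 L3 L4 :: complex by (simp add: mult_ac)
  show ?thesis unfolding gen e14 e23 pp ..
qed


lemma normE:
  fixes b0 b1 b2 b3 b4 :: complex
  shows "(b0+b1+b2+b3+b4) * ((b0^2+b1^2+b2^2+b3^2+b4^2)^2 - (b0^2+b1^2+b2^2+b3^2+b4^2)*((b0*b1+b1*b2+b2*b3+b3*b4+b4*b0)+(b0*b2+b1*b3+b2*b4+b3*b0+b4*b1))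
     - (b0*b1+b1*b2+b2*b3+b3*b4+b4*b0)^2 - (b0*b2+b1*b3+b2*b4+b3*b0+b4*b1)^2 + 3*(b0*b1+b1*b2+b2*b3+b3*b4+b4*b0)*(b0*b2+b1*b3+b2*b4+b3*b0+b4*b1)) = Nf b0 b1 b2 b3 b4 1"
  unfolding Nf_def Qf_def power_one mult_1_right mult_1_left by algebra

lemma normT:
  fixes t a0 a1 a2 a3 a4 :: complex
  shows "Nf a0 (t*a1) (t^2*a2) (t^3*a3) (t^4*a4) 1 = Nf a0 a1 a2 a3 a4 (t^5)"
  unfolding Nf_def Qf_def power_one mult_1_right mult_1_left by algebra

lemma sum5: "(\<Sum>r<(5::nat). f r) = f 0 + f 1 + f 2 + f 3 + (f 4 :: 'a::comm_monoid_add)"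
  by (simp add: eval_nat_numeral add_ac)
lemma prod5: "(\<Prod>r<(5::nat). f r) = f 0 * f 1 * f 2 * f 3 * (f 4 :: 'a::comm_monoid_mult)"
  by (simp add: eval_nat_numeral mult_ac)

lemma norm_prod:
  fixes z t :: complex and a :: "nat \<Rightarrow> complex"
  assumes z5: "z^5 = 1" and phi: "1+z+z^2+z^3+z^4 = 0"
  shows "(\<Prod>j<5. \<Sum>r<5. (z^j*t)^r * a r) = Nf (a 0) (a 1) (a 2) (a 3) (a 4) (t^5)"
proof -
  have zm: "z^n = z^(n mod 5)" for n
  proof -
    have "z^n = z^(5*(n div 5) + n mod 5)" by simp
    also have "\<dots> = (z^5)^(n div 5) * z^(n mod 5)" by (simp only: power_add power_mult)
    finally have "z^n = (z^5)^(n div 5) * z^(n mod 5)" .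
    then show ?thesis using z5 by simp
  qed
  define b where "b r = t^r * a r" for r
  have "(\<Prod>j<5. \<Sum>r<5. (z^j*t)^r * a r) = (\<Prod>j<5. \<Sum>r<5. z^((j*r) mod 5) * b r)"
    unfolding b_def by (intro prod.cong sum.cong refl) (simp add: power_mult_distrib zm[of "j*r" for j r, symmetric] power_mult)
  also have "\<dots> = (b 0+b 1+b 2+b 3+b 4) * (b 0 + z*b 1 + z^2*b 2 + z^3*b 3 + z^4*b 4) * (b 0 + z^2*b 1 + z^4*b 2 + z*b 3 + z^3*b 4)
     * (b 0 + z^3*b 1 + z*b 2 + z^4*b 3 + z^2*b 4) * (b 0 + z^4*b 1 + z^3*b 2 + z^2*b 3 + z*b 4)"
    unfolding sum5 prod5 by simp
  also have "\<dots> = Nf (b 0) (b 1) (b 2) (b 3) (b 4) 1"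
    by (subst normB_aux[OF z5 phi refl refl refl]) (rule normE)
  also have "\<dots> = Nf (a 0) (a 1) (a 2) (a 3) (a 4) (t^5)"
    unfolding b_def using normT[of "a 0" t "a 1" "a 2" "a 3" "a 4"] by simp
  finally show ?thesis .
qed

lemma cp_Nf: "cp (Nf a0 a1 a2 a3 a4 y) = Nf (cp a0) (cp a1) (cp a2) (cp a3) (cp a4) (cp y)"
  by (simp add: Nf_def Qf_def cp_add cp_diff cp_mult cp_pow cp_numeral cp_minus)

lemma poly_Nf: "poly (Nf a0 a1 a2 a3 a4 y) x = Nf (poly a0 x) (poly a1 x) (poly a2 x) (poly a3 x) (poly a4 x) (poly y x)"
  by (simp add: Nf_def Qf_def)

lemma pow_swap: "((x::'a::monoid_mult)^a)^b = (x^b)^a"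
  by (simp add: power_mult[symmetric] mult.commute)

definition GG :: "int poly \<Rightarrow> int poly" where
  "GG F = Nf (Fs F 0) (Fs F 1) (Fs F 2) (Fs F 3) (Fs F 4) [:0,1:]"

lemma GG_eval:
  fixes z t :: complex
  assumes z5: "z^5 = 1" and phi: "1+z+z^2+z^3+z^4 = 0"
  shows "poly (cp (GG F)) (t^5) = (\<Prod>j<5. poly (cp F) (z^j * t))"
proof -
  have zt: "(z^j * t)^5 = t^5" for j :: nat
    by (simp add: power_mult_distrib pow_swap[of z j 5] z5)
  have "(\<Prod>j<5. poly (cp F) (z^j * t)) = (\<Prod>j<5. \<Sum>r<5. (z^j*t)^r * poly (cp (Fs F r)) (t^5))"
    by (intro prod.cong refl) (simp add: decomp_eval[of F "z^_ * t"] zt)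
  also have "\<dots> = Nf (poly (cp (Fs F 0)) (t^5)) (poly (cp (Fs F 1)) (t^5)) (poly (cp (Fs F 2)) (t^5))
      (poly (cp (Fs F 3)) (t^5)) (poly (cp (Fs F 4)) (t^5)) (t^5)"
    by (rule norm_prod[OF z5 phi])
  also have "\<dots> = poly (cp (GG F)) (t^5)"
    unfolding GG_def cp_Nf poly_Nf cp_X by simp
  finally show ?thesis by simp
qed

lemma omega_pow: "omega j ^ n = exp (of_nat n * (2 * pi * \<i> / of_nat (5 ^ j)))"
  unfolding omega_def by (simp only: exp_of_nat_mult)

lemma omega2_5: "omega 2 ^ 5 = omega 1"
proof -
  have e: "(of_nat 5 * (2 * pi * \<i> / of_nat (5 ^ 2)) :: complex) = 2 * pi * \<i> / of_nat (5 ^ 1)"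
    by simp
  show ?thesis unfolding omega_pow e by (simp only: omega_def)
qed

lemma omega1_5: "omega 1 ^ 5 = 1"
proof -
  have e: "(of_nat 5 * (2 * pi * \<i> / of_nat (5 ^ 1)) :: complex) = 2 * complex_of_real pi * \<i>"
    by simp
  show ?thesis unfolding omega_pow e by (rule exp_two_pi_i)
qed

lemma omega2_shift: "omega 2 ^ (a + 5*j) = omega 1 ^ j * omega 2 ^ a"
proof -
  have "omega 2 ^ (a+5*j) = omega 2 ^ a * (omega 2 ^ 5)^j" by (simp add: power_add power_mult)
  then show ?thesis unfolding omega2_5 by (simp add: mult.commute)
qed

lemma omega1_ne1: assumes "1 \<le> l" "l \<le> 4" shows "omega 1 ^ l \<noteq> 1"
proof
  assume "omega 1 ^ l = 1"
  then obtain n :: int where n: "2 * pi * real l / 5 = of_int (2 * n) * pi"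
    unfolding omega_pow exp_eq_1 by auto
  then have "real l = 5 * of_int n" by (simp add: field_simps)
  then have "int l = 5 * n" by (metis of_int_eq_iff of_int_mult of_int_of_nat_eq of_int_numeral)
  then show False using assms by presburger
qed

lemma phi_root: assumes "w^5 = 1" "w \<noteq> (1::complex)" shows "1 + w + w^2 + w^3 + w^4 = 0"
proof -
  have "(w - 1) * (1 + w + w^2 + w^3 + w^4) = w^5 - 1" by (simp add: algebra_simps eval_nat_numeral)
  then show ?thesis using assms by simp
qed

lemma omega1_phi: assumes "1 \<le> l" "l \<le> 4" shows "1 + omega 1 ^ l + (omega 1 ^ l)^2 + (omega 1 ^ l)^3 + (omega 1 ^ l)^4 = 0"
proof (rule phi_root)
  show "(omega 1 ^ l)^5 = 1" by (metis pow_swap omega1_5 power_one)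
  show "omega 1 ^ l \<noteq> 1" using omega1_ne1 assms .
qed

lemma omega1_phi1: "1 + omega 1 + omega 1^2 + omega 1^3 + omega 1^4 = 0"
  using omega1_phi[of 1] by simp

lemma set25: "bij_betw (\<lambda>(a,j). a + 5*j) ({1..4::nat} \<times> {..<5::nat}) {l. 1 \<le> l \<and> l \<le> 5^2 \<and> \<not> 5 dvd l}"
proof (rule bij_betw_imageI)
  show "inj_on (\<lambda>(a,j). a + 5*j) ({1..4::nat} \<times> {..<5::nat})"
    by (auto simp: inj_on_def; presburger)
  show "(\<lambda>(a,j). a + 5*j) ` ({1..4::nat} \<times> {..<5::nat}) = {l. 1 \<le> l \<and> l \<le> 5^2 \<and> \<not> 5 dvd l}"
  proof (rule set_eqI, rule iffI)
    fix l assume "l \<in> (\<lambda>(a,j). a + 5*j) ` ({1..4::nat} \<times> {..<5::nat})"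
    then obtain a j where "a \<in> {1..4}" "j < 5" "l = a + 5*j" by auto
    then show "l \<in> {l. 1 \<le> l \<and> l \<le> 5^2 \<and> \<not> 5 dvd l}" by auto presburger
  next
    fix l assume l: "l \<in> {l. 1 \<le> l \<and> l \<le> 5^2 \<and> \<not> (5::nat) dvd l}"
    have "l mod 5 \<in> {1..4}" using l by auto presburger
    moreover have "l div 5 < 5" using l by auto presburger
    ultimately have m: "(l mod 5, l div 5) \<in> {1..4::nat} \<times> {..<5::nat}" by simp
    have "l = (\<lambda>(a,j). a + 5*j) (l mod 5, l div 5)" by simp
    then show "l \<in> (\<lambda>(a,j). a + 5*j) ` ({1..4::nat} \<times> {..<5::nat})"
      using m by (rule image_eqI)
  qed
qed

lemma set5: "{l. 1 \<le> l \<and> l \<le> 5^1 \<and> \<not> 5 dvd l} = {1..4::nat}"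
  by auto presburger+

lemma N2_N1: "Nnorm 2 F = Nnorm 1 (GG F)"
proof -
  have "Nnorm 2 F = (\<Prod>x\<in>{1..4::nat} \<times> {..<5::nat}. poly (cp F) (omega 2 ^ (case x of (a,j) \<Rightarrow> a + 5*j)))"
    unfolding Nnorm_def using prod.reindex_bij_betw[OF set25, of "\<lambda>l. poly (cp F) (omega 2 ^ l)"]
    by simp
  also have "\<dots> = (\<Prod>a\<in>{1..4::nat}. \<Prod>j<5. poly (cp F) (omega 2 ^ (a + 5*j)))"
    by (simp add: prod.cartesian_product case_prod_beta)
  also have "\<dots> = (\<Prod>a\<in>{1..4::nat}. \<Prod>j<5. poly (cp F) (omega 1 ^ j * omega 2 ^ a))"
    by (intro prod.cong refl) (simp only: omega2_shift)
  also have "\<dots> = (\<Prod>a\<in>{1..4::nat}. poly (cp (GG F)) ((omega 2 ^ a)^5))"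
    by (intro prod.cong refl GG_eval[OF omega1_5 omega1_phi1, symmetric])
  also have "\<dots> = (\<Prod>a\<in>{1..4::nat}. poly (cp (GG F)) (omega 1 ^ a))"
    by (intro prod.cong refl) (metis pow_swap omega2_5)
  also have "\<dots> = Nnorm 1 (GG F)"
    unfolding Nnorm_def set5 ..
  finally show ?thesis .
qed

lemma frob_Fs: "[:5:] dvd (Fs F r)^5 - Fr5 F r"
  unfolding Fs_def Fr5_def by (rule frob5) simp

lemma GG_mod5: "[:5:] dvd GG F - F"
proof -
  let ?X = "[:0,1:] :: int poly"
  have F: "F = Fr5 F 0 + ?X * Fr5 F 1 + ?X^2 * Fr5 F 2 + ?X^3 * Fr5 F 3 + ?X^4 * Fr5 F 4"
    using decomp_poly[of F] unfolding sum5 by (simp add: monom_altdef)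
  have "GG F - F = ((Fs F 0)^5 - Fr5 F 0) + ?X * ((Fs F 1)^5 - Fr5 F 1) + ?X^2 * ((Fs F 2)^5 - Fr5 F 2)
     + ?X^3 * ((Fs F 3)^5 - Fr5 F 3) + ?X^4 * ((Fs F 4)^5 - Fr5 F 4)
     + [:5:] * Qf (Fs F 0) (Fs F 1) (Fs F 2) (Fs F 3) (Fs F 4) ?X"
    apply (subst (2) F)
    unfolding GG_def Nf_def numeral_poly[where n="num.Bit1 (num.Bit0 num.One)", symmetric]
    by (simp add: algebra_simps)
  also have "[:5:] dvd \<dots>"
    by (intro dvd_add dvd_mult frob_Fs dvd_triv_left)
  finally show ?thesis .
qed

lemma phi_ident: "[:1,1,1,1,1:] * [:5,-6,2:] = [:5:] + [:-1,1:]^3 * ([:0,1,2,2:] :: int poly)"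
  by (simp add: eval_nat_numeral)

lemma poly_phi: "poly (cp [:1,1,1,1,1:]) (w::complex) = 1 + w + w^2 + w^3 + w^4"
  by (simp add: map_poly_pCons algebra_simps eval_nat_numeral)

lemma ring_id: "(G::'a::comm_ring_1) = (1 + Z*h) + (P*U - Z*S)*W \<Longrightarrow> G = (1 + Z*(h - W*S)) + P*(U*W)"
  by (simp add: algebra_simps)

lemma dvd5_aux: "(5::int) dvd a - b * 5 \<longleftrightarrow> 5 dvd a" "(5::int) dvd a - 5 * b \<longleftrightarrow> 5 dvd a"
  by presburger+

theorem lemma3p3:
  fixes m :: int and h :: "int poly"
  assumes "of_int m = Nnorm 2 (1 + [:-1, 1:] ^ 3 * h)"
  shows "\<exists>k :: int poly. of_int m = Nnorm 1 (1 + [:-1, 1:] ^ 3 * k)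
           \<and> (\<not> 5 dvd poly h 1 \<longrightarrow> \<not> 5 dvd poly k 1)
           \<and> (5 dvd poly h 1 \<longrightarrow> 5 dvd poly k 1)"
proof -
  define F where "F = 1 + [:-1, 1:] ^ 3 * h"
  obtain W where W: "GG F - F = [:5:] * W" using GG_mod5[of F] by (elim dvdE)
  define k where "k = h - W * [:0,1,2,2:]"
  have Geq: "GG F = (1 + [:-1,1:]^3 * k) + [:1,1,1,1,1:] * ([:5,-6,2:] * W)"
  proof -
    have "GG F = F + [:5:] * W" using W by (simp add: algebra_simps)
    also have "\<dots> = F + ([:1,1,1,1,1:] * [:5,-6,2:] - [:-1,1:]^3 * [:0,1,2,2:]) * W"
      by (simp only: phi_ident) simp
    finally have "GG F = (1 + [:-1, 1:] ^ 3 * h) + ([:1,1,1,1,1:] * [:5,-6,2:] - [:-1,1:]^3 * [:0,1,2,2:]) * W"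
      unfolding F_def .
    then show ?thesis unfolding k_def by (rule ring_id)
  qed
  have "Nnorm 2 F = Nnorm 1 (GG F)" by (rule N2_N1)
  also have "\<dots> = Nnorm 1 (1 + [:-1,1:]^3 * k)"
    unfolding Nnorm_def set5
  proof (rule prod.cong[OF refl])
    fix l assume l: "l \<in> {1..4::nat}"
    have "poly (cp (GG F)) (omega 1 ^ l) = poly (cp (1 + [:-1,1:]^3 * k)) (omega 1 ^ l)
        + poly (cp [:1,1,1,1,1:]) (omega 1 ^ l) * poly (cp ([:5,-6,2:] * W)) (omega 1 ^ l)"
      unfolding Geq cp_add cp_mult poly_add poly_mult ..
    also have "poly (cp [:1,1,1,1,1:]) (omega 1 ^ l) = 0"
      unfolding poly_phi using omega1_phi l by simp
    finally show "poly (cp (GG F)) (omega 1 ^ l) = poly (cp (1 + [:-1,1:]^3 * k)) (omega 1 ^ l)" by simp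
  qed
  finally have N: "of_int m = Nnorm 1 (1 + [:-1,1:]^3 * k)" using assms unfolding F_def by simp
  have k1: "poly k 1 = poly h 1 + (- poly W 1) * 5" unfolding k_def by simp
  show ?thesis
    by (intro exI[of _ k] conjI N impI) (simp_all add: k_def dvd5_aux)
qed

end
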